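(* For every integer $k\ge3$, $a_{k-1}(K_{1,2k})<a_k(K_{1,2k})$, where $K_{1,2k}$ is the star graph with $2k+1$ vertices.
   Context: All graphs are finite simple graphs; $G|_I$ is the induced subgraph on $I\subseteq V(G)$. The signed $a$-number: $sa(\emptyset)=1$; if $G$ has connected components $G_1,\dots,G_\ell$, $sa(G)=\prod_k sa(G_k)$; if $G$ is connected and nonempty, $sa(G)=-\sum_{I\subsetneq V(G)}sa(G|_I)$ when $|V(G)|$ is even and $0$ when odd. $a(G)=|sa(G)|$ and $a_i(G)=\sum_{I\subseteq V(G),|I|=2i}a(G|_I)$. The star graph $K_{1,m}$ has one center vertex adjacent to each of $m$ leaves and no other edges. *)

theory Defs
  imports Main
begin

text \<open>The induced subgraph on I \<subseteq> V is
  (I, Es) with only the edges having both endpoints in I being relevant;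
  all notions below only look at edges inside the current vertex set.\<close>

definition adjrel :: "'a set set \<Rightarrow> 'a set \<Rightarrow> ('a \<times> 'a) set" where
  "adjrel Es V = {(a, b). a \<in> V \<and> b \<in> V \<and> {a, b} \<in> Es}"

definition reach :: "'a set set \<Rightarrow> 'a set \<Rightarrow> 'a \<Rightarrow> 'a \<Rightarrow> bool" where
  "reach Es V x y \<longleftrightarrow> (x, y) \<in> (adjrel Es V)\<^sup>*"

definition graph_connected :: "'a set set \<Rightarrow> 'a set \<Rightarrow> bool" where
  "graph_connected Es V \<longleftrightarrow> V \<noteq> {} \<and> (\<forall>x\<in>V. \<forall>y\<in>V. reach Es V x y)"

definition components :: "'a set set \<Rightarrow> 'a set \<Rightarrow> 'a set set" where
  "components Es V = (\<lambda>x. {y \<in> V. reach Es V x y}) ` V"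

lemma adjrel_sym: "sym (adjrel Es V)"
  unfolding adjrel_def sym_def by (auto simp: insert_commute)

lemma reach_sym: "reach Es V x y \<Longrightarrow> reach Es V y x"
  unfolding reach_def using sym_rtrancl[OF adjrel_sym, of Es V] unfolding sym_def by blast

lemma component_psubset:
  assumes "V \<noteq> {}" "\<not> graph_connected Es V" "C \<in> components Es V"
  shows "C \<subset> V"
proof -
  obtain x where x: "x \<in> V" "C = {y \<in> V. reach Es V x y}"
    using assms(3) unfolding components_def by auto
  have "C \<noteq> V"
  proof
    assume "C = V"
    then have "\<forall>y\<in>V. reach Es V x y" using x by auto
    then have "\<forall>y\<in>V. \<forall>z\<in>V. reach Es V y z"
      using reach_sym unfolding reach_def by (meson rtrancl_trans)
    then show False using assms(1,2) unfolding graph_connected_def by auto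
  qed
  then show ?thesis using x by auto
qed

function sa :: "'a set set \<Rightarrow> 'a set \<Rightarrow> int" where
  "sa Es V =
    (if infinite V then 0
     else if V = {} then 1
     else if graph_connected Es V then
       (if even (card V) then - (\<Sum>I \<in> {I. I \<subset> V}. sa Es I) else 0)
     else (\<Prod>C \<in> components Es V. sa Es C))"
  by pat_completeness auto
termination
proof (relation "measure (\<lambda>(Es, V). card V)")
  show "wf (measure (\<lambda>(Es, V). card V))" by simp
next
  fix Es :: "'a set set" and V I
  assume "\<not> infinite V" "I \<in> {I. I \<subset> V}"
  then show "((Es, I), Es, V) \<in> measure (\<lambda>(Es, V). card V)"
    by (auto intro: psubset_card_mono)
next
  fix Es :: "'a set set" and V C
  assume "\<not> infinite V" "V \<noteq> {}" "\<not> graph_connected Es V" "C \<in> components Es V"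
  then show "((Es, C), Es, V) \<in> measure (\<lambda>(Es, V). card V)"
    using component_psubset[of V Es C] by (simp add: psubset_card_mono)
qed

declare sa.simps[simp del]

definition a_num :: "'a set set \<Rightarrow> 'a set \<Rightarrow> nat" where
  "a_num Es V = nat \<bar>sa Es V\<bar>"

definition a_i :: "nat \<Rightarrow> 'a set set \<Rightarrow> 'a set \<Rightarrow> nat" where
  "a_i i Es V = (\<Sum>I \<in> {I. I \<subseteq> V \<and> card I = 2 * i}. a_num Es I)"

definition star_edges :: "'a \<Rightarrow> 'a set \<Rightarrow> 'a set set" where
  "star_edges c L = {{c, l} | l. l \<in> L}"

end

theory Submission
  imports Defs "HOL-Computational_Algebra.Formal_Power_Series"
begin
unbundle fps_syntax

function ss :: "nat \<Rightarrow> int" where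
  "ss m = (if even m then 0 else - (1 + (\<Sum>j<m. int (m choose j) * ss j)))"
  by pat_completeness auto
termination by (relation "measure id") auto

declare ss.simps[simp del]

lemma ss_even: "even m \<Longrightarrow> ss m = 0" using ss.simps[of m] by simp

lemma ss_odd_sum: assumes "odd m" shows "(\<Sum>j\<le>m. int (m choose j) * ss j) = -1"
proof -
  have "(\<Sum>j\<le>m. int (m choose j) * ss j) = (\<Sum>j<m. int (m choose j) * ss j) + ss m"
    by (simp add: lessThan_Suc_atMost[symmetric])
  also have "ss m = - (1 + (\<Sum>j<m. int (m choose j) * ss j))" using ss.simps[of m] assms by simp
  finally show ?thesis by simp
qed

definition FF :: "real fps" where "FF = Abs_fps (\<lambda>n. of_int (ss n) / fact n)"
definition XX :: "real fps" where "XX = fps_exp 1"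
definition YY :: "real fps" where "YY = fps_exp (-1)"

lemma FF_lin: "FF * (XX + YY) = YY - XX"
proof (rule fps_ext)
  fix n
  have t: "of_int (ss i) / fact i * ((1 + (-1)^(n-i)) / fact (n-i)) =
      (if even n then 0 else 2 * of_int (int (n choose i) * ss i) / (fact n :: real))" if "i \<le> n" for i :: nat
  proof (cases "even i")
    case True then show ?thesis by (simp add: ss_even)
  next
    case False
    show ?thesis
    proof (cases "even n")
      case True
      with False that have "odd (n - i)" by auto
      then show ?thesis using True by simp
    next
      case F2: False
      with False that have "even (n - i)" by auto
      then show ?thesis using F2 that by (simp add: binomial_fact field_simps)
    qed
  qed
  have "(FF * (XX + YY)) $ n = (\<Sum>i=0..n. of_int (ss i) / fact i * ((1 + (-1)^(n-i)) / fact (n-i)))"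
    by (simp add: fps_mult_nth FF_def XX_def YY_def add_divide_distrib)
  also have "\<dots> = (\<Sum>i=0..n. (if even n then 0 else 2 * of_int (int (n choose i) * ss i) / fact n))"
    by (rule sum.cong[OF refl], rule t) simp
  also have "\<dots> = (YY - XX) $ n"
  proof (cases "even n")
    case True then show ?thesis by (simp add: XX_def YY_def)
  next
    case False
    have "(\<Sum>i=0..n. 2 * of_int (int (n choose i) * ss i) / fact n) =
       2 * of_int (\<Sum>i\<le>n. int (n choose i) * ss i) / (fact n :: real)"
      by (simp add: sum_divide_distrib sum_distrib_left atLeast0AtMost)
    also have "\<dots> = -2 / fact n" using ss_odd_sum[OF False] by simp
    finally show ?thesis using False by (simp add: XX_def YY_def diff_divide_distrib)
  qed
  finally show "(FF * (XX + YY)) $ n = (YY - XX) $ n" .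
qed

lemma dX: "fps_deriv XX = XX" by (rule fps_ext) (simp add: XX_def)
lemma dY: "fps_deriv YY = - YY" by (rule fps_ext) (simp add: YY_def)

lemma FF_ode: "fps_deriv FF = FF^2 - 1"
proof -
  define P where "P = XX + YY"
  define Q where "Q = XX - YY"
  have e: "FF * P = - Q" using FF_lin by (simp add: P_def Q_def)
  have "fps_deriv (FF * P) = fps_deriv (- Q)" using e by simp
  then have d: "fps_deriv FF * P + FF * Q + P = 0"
    by (simp add: P_def Q_def dX dY algebra_simps)
  have "(fps_deriv FF - FF^2 + 1) * P^2 = (fps_deriv FF * P + FF * Q + P) * P - (FF * P) * (FF * P + Q)"
    by (simp add: algebra_simps power2_eq_square)
  also have "\<dots> = 0" using d e by simp
  finally have z: "(fps_deriv FF - FF^2 + 1) * P^2 = 0" .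
  have "P $ 0 = 2" by (simp add: P_def XX_def YY_def)
  then have "P \<noteq> 0" by auto
  then have "P^2 \<noteq> 0" by simp
  with z have "fps_deriv FF - FF^2 + 1 = 0" by simp
  then show ?thesis by (simp add: algebra_simps)
qed

lemma ss_quad: assumes "n \<ge> 1"
  shows "ss (n+1) = (\<Sum>i\<le>n. int (n choose i) * ss i * ss (n - i))"
proof -
  have "(fps_deriv FF) $ n = (FF^2 - 1) $ n" using FF_ode by simp
  then have "of_nat (n+1) * (of_int (ss (n+1)) / fact (n+1)) =
      (\<Sum>i=0..n. of_int (ss i) / fact i * (of_int (ss (n-i)) / fact (n-i)) :: real)"
    using assms by (simp add: FF_def power2_eq_square fps_mult_nth)
  also have "\<dots> = (\<Sum>i=0..n. of_int (int (n choose i) * ss i * ss (n - i)) / fact n)"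
    by (rule sum.cong) (auto simp: binomial_fact field_simps)
  also have "\<dots> = of_int (\<Sum>i\<le>n. int (n choose i) * ss i * ss (n - i)) / fact n"
    by (simp add: sum_divide_distrib atLeast0AtMost)
  finally have h: "of_nat (n+1) * (of_int (ss (n+1)) / fact (n+1)) = 
     of_int (\<Sum>i\<le>n. int (n choose i) * ss i * ss (n - i)) / (fact n :: real)" .
  have ff: "fact (n+1) = (of_nat (n+1)) * (fact n :: real)" by simp
  have "of_nat (n+1) * (of_int (ss (n+1)) / fact (n+1)) = of_int (ss (n+1)) / (fact n :: real)"
    unfolding ff by (simp del: of_nat_Suc)
  with h have "(of_int (ss (n+1)) :: real) = of_int (\<Sum>i\<le>n. int (n choose i) * ss i * ss (n - i))"
    by (simp add: field_simps)
  then show ?thesis by (simp only: of_int_eq_iff)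
qed

definition uu :: "nat \<Rightarrow> int" where "uu n = (-1)^((n+1) div 2) * ss n"

lemma uu_even: "even n \<Longrightarrow> uu n = 0" by (simp add: uu_def ss_even)

lemma uu_rec: assumes "n \<ge> 1" shows "uu (n+1) = (\<Sum>j\<le>n. int (n choose j) * uu j * uu (n-j))"
proof (cases "even n")
  case False
  then have "even (n+1)" by simp
  then have l: "uu (n+1) = 0" by (rule uu_even)
  have "int (n choose j) * uu j * uu (n-j) = 0" if "j \<le> n" for j
  proof (cases "even j")
    case True then show ?thesis by (simp add: uu_even)
  next
    case F: False
    with False that have "even (n - j)" by auto
    then show ?thesis by (simp add: uu_even)
  qed
  then have "(\<Sum>j\<le>n. int (n choose j) * uu j * uu (n-j)) = 0"
    by (intro sum.neutral) auto
  then show ?thesis using l by simp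
next
  case True
  have tm: "int (n choose j) * uu j * uu (n-j) = (-1)^((n+2) div 2) * (int (n choose j) * ss j * ss (n-j))" if "j \<le> n" for j
  proof (cases "even j")
    case True then show ?thesis by (simp add: uu_even ss_even)
  next
    case False
    then obtain a where a: "j = 2*a+1" by (metis oddE)
    from False True that have "odd (n - j)" by auto
    then obtain b where b: "n - j = 2*b+1" by (metis oddE)
    have e1: "(n+2) div 2 = (a+1)+(b+1)" using a b that by arith
    have e2: "(j+1) div 2 = a+1" using a by arith
    have e3: "(n-j+1) div 2 = b+1" using b by arith
    show ?thesis unfolding uu_def e1 e2 e3 power_add by (simp add: algebra_simps)
  qed
  have "uu (n+1) = (-1)^((n+2) div 2) * ss (n+1)" by (simp add: uu_def)
  also have "\<dots> = (-1)^((n+2) div 2) * (\<Sum>j\<le>n. int (n choose j) * ss j * ss (n - j))"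
    using ss_quad[OF assms] by simp
  also have "\<dots> = (\<Sum>j\<le>n. int (n choose j) * uu j * uu (n-j))"
    by (simp add: sum_distrib_left tm)
  finally show ?thesis .
qed

lemma ss_1': "ss (Suc 0) = -1" by (subst ss.simps) (simp add: ss_even)
lemma ss_1: "ss 1 = -1" using ss_1' by simp
lemma ss_3: "ss 3 = 2"
proof -
  have "ss 3 = - (1 + (\<Sum>j<3. int (3 choose j) * ss j))" by (subst ss.simps) simp
  also have "(\<Sum>j<3. int (3 choose j) * ss j) = ss 0 + 3 * ss 1 + 3 * ss 2"
    by (simp add: numeral_3_eq_3 numeral_2_eq_2 lessThan_Suc)
  finally show ?thesis by (simp add: ss_1 ss_1' ss_even)
qed
lemma uu_1: "uu 1 = 1" by (simp add: uu_def ss_1 ss_1')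
lemma uu_3: "uu 3 = 2" by (simp add: uu_def ss_3)
lemma uu_3': "uu (Suc (Suc (Suc 0))) = 2" using uu_3 by (simp add: numeral_3_eq_3)

lemma binom_shift2: "n \<ge> 2 \<Longrightarrow> (n choose (i+2)) * (i+2) * (i+1) = n * (n-1) * ((n-2) choose i)"
proof -
  assume "n \<ge> 2"
  then obtain p where p: "n = Suc (Suc p)" by (metis add_2_eq_Suc le_Suc_ex)
  have h1: "Suc (Suc p) * (Suc p choose Suc i) = (Suc (Suc p) choose Suc (Suc i)) * Suc (Suc i)"
    by (rule Suc_times_binomial_eq)
  have h2: "Suc p * (p choose i) = (Suc p choose Suc i) * Suc i"
    by (rule Suc_times_binomial_eq)
  have "(n choose (i+2)) * (i+2) * (i+1) = ((Suc (Suc p) choose Suc (Suc i)) * Suc (Suc i)) * Suc i"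
    unfolding p add_2_eq_Suc' Suc_eq_plus1[symmetric] ..
  also have "\<dots> = Suc (Suc p) * ((Suc p choose Suc i) * Suc i)"
    by (simp only: h1[symmetric] mult.assoc)
  also have "\<dots> = Suc (Suc p) * (Suc p * (p choose i))"
    by (simp only: h2)
  also have "\<dots> = n * (n-1) * ((n-2) choose i)" using p by (simp add: algebra_simps)
  finally show ?thesis .
qed

lemma uu_bound: "odd m \<Longrightarrow> uu m > 0 \<and> 3 * uu (m+2) \<ge> int ((m+2)*(m+1)) * uu m"
proof (induction m rule: less_induct)
  case (less m)
  show ?case
  proof (cases "m = 1")
    case True then show ?thesis unfolding True using uu_1 uu_3 uu_3' by simp
  next
    case False
    with less.prems have m3: "m \<ge> 3" by (auto elim!: oddE)
    have IHm2: "uu (m-2) > 0 \<and> 3 * uu (m-2+2) \<ge> int ((m-2+2)*(m-2+1)) * uu (m-2)"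
      using less.IH[of "m-2"] m3 less.prems by auto
    have eq1: "m - 2 + 2 = m" and eq2: "m - 2 + 1 = m - 1" using m3 by auto
    have "3 * uu m \<ge> int (m*(m-1)) * uu (m-2)" using IHm2 by (simp only: eq1 eq2)
    moreover have "int (m*(m-1)) * uu (m-2) > 0" using IHm2 m3 by simp
    ultimately have pos: "uu m > 0" by linarith
    have nn: "uu j \<ge> 0" if "j \<le> m" for j
    proof (cases "even j")
      case True then show ?thesis by (simp add: uu_even)
    next
      case False
      show ?thesis
      proof (cases "j = m")
        case True then show ?thesis using pos by simp
      next
        case False
        with that have "j < m" by simp
        then show ?thesis using less.IH[of j] \<open>odd j\<close> by auto
      qed
    qed
    define n where "n = m + 1"
    define f where "f j = int (n choose j) * uu j * uu (n-j)" for j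
    have n2: "n = Suc (Suc (n-2))" using m3 n_def by simp
    have "uu (m+2) = (\<Sum>j\<le>n. f j)" unfolding f_def using uu_rec[of n] n_def by simp
    also have "\<dots> = f 0 + (f 1 + (\<Sum>i\<le>n-2. f (i+2)))"
      by (subst n2, simp only: sum.atMost_Suc_shift) simp
    also have "f 0 = 0" by (simp add: f_def uu_even)
    also have "f 1 = int n * uu m" using uu_1 by (simp add: f_def n_def)
    finally have A: "uu (m+2) = int n * uu m + (\<Sum>i\<le>n-2. f (i+2))" by simp
    have B: "3 * f (i+2) \<ge> int n * int (n-1) * (int ((n-2) choose i) * uu i * uu (n-2-i))"
      if "i \<le> n-2" for i
    proof -
      have c: "3 * uu (i+2) \<ge> int ((i+2)*(i+1)) * uu i"
      proof (cases "even i")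
        case True then show ?thesis by (simp add: uu_even)
      next
        case False
        then have "i < m" using that n_def less.prems by (auto elim!: oddE)
        then show ?thesis using less.IH[of i] False by simp
      qed
      have d: "uu (n-(i+2)) \<ge> 0" using nn[of "n-(i+2)"] n_def by simp
      have e1: "int ((i+2)*(i+1)) * uu i * uu (n-(i+2)) \<le> 3 * uu (i+2) * uu (n-(i+2))"
        by (rule mult_right_mono[OF c d])
      have e2: "int (n choose (i+2)) * (int ((i+2)*(i+1)) * uu i * uu (n-(i+2))) \<le>
            int (n choose (i+2)) * (3 * uu (i+2) * uu (n-(i+2)))"
        by (rule mult_left_mono[OF e1]) simp
      have e3: "int (n choose (i+2)) * int ((i+2)*(i+1)) = int n * int (n-1) * int ((n-2) choose i)"
      proof -
        have "n \<ge> 2" using m3 n_def by simp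
        from binom_shift2[OF this, of i]
        have "(n choose (i+2)) * ((i+2)*(i+1)) = n * (n-1) * ((n-2) choose i)"
          by (simp only: mult.assoc)
        then have "int ((n choose (i+2)) * ((i+2)*(i+1))) = int (n * (n-1) * ((n-2) choose i))"
          by (rule arg_cong)
        then show ?thesis by (simp only: of_nat_mult)
      qed
      have e4: "n - (i+2) = n-2-i" by simp
      have "int n * int (n-1) * (int ((n-2) choose i) * uu i * uu (n-2-i)) =
         (int (n choose (i+2)) * int ((i+2)*(i+1))) * uu i * uu (n-(i+2))"
        unfolding e3 e4 by (simp only: mult.assoc)
      also have "\<dots> = int (n choose (i+2)) * (int ((i+2)*(i+1)) * uu i * uu (n-(i+2)))"
        by (simp only: mult.assoc)
      also have "\<dots> \<le> int (n choose (i+2)) * (3 * uu (i+2) * uu (n-(i+2)))" by (rule e2)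
      also have "\<dots> = 3 * f (i+2)" unfolding f_def by (simp only: mult_ac)
      finally show ?thesis .
    qed
    have "3 * (\<Sum>i\<le>n-2. f (i+2)) \<ge> (\<Sum>i\<le>n-2. int n * int (n-1) * (int ((n-2) choose i) * uu i * uu (n-2-i)))"
      unfolding sum_distrib_left by (rule sum_mono) (use B in auto)
    also have "(\<Sum>i\<le>n-2. int n * int (n-1) * (int ((n-2) choose i) * uu i * uu (n-2-i))) = int n * int (n-1) * uu m"
    proof -
      have "uu (n-2+1) = (\<Sum>i\<le>n-2. int ((n-2) choose i) * uu i * uu (n-2-i))"
        using uu_rec[of "n-2"] m3 n_def by simp
      moreover have "n-2+1 = m" using m3 n_def by simp
      ultimately show ?thesis by (simp add: sum_distrib_left)
    qed
    finally have C: "3 * (\<Sum>i\<le>n-2. f (i+2)) \<ge> int n * int (n-1) * uu m" .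
    have D: "int ((m+2)*(m+1)) = int n * int (n-1) + 2 * int n" using n_def by (simp add: algebra_simps)
    have "int n * uu m \<ge> 0" using pos by simp
    then have "3 * uu (m+2) \<ge> int ((m+2)*(m+1)) * uu m"
      using A C D by (simp add: algebra_simps)
    with pos show ?thesis by simp
  qed
qed



lemma edge_iff: "{a,b} \<in> star_edges c L \<longleftrightarrow> (a = c \<and> b \<in> L) \<or> (b = c \<and> a \<in> L)"
  unfolding star_edges_def by (auto simp: doubleton_eq_iff)

lemma adj_L: "c \<notin> L \<Longrightarrow> I \<subseteq> L \<Longrightarrow> adjrel (star_edges c L) I = {}"
  unfolding adjrel_def using edge_iff[of _ _ c L] by auto

lemma reach_L: "c \<notin> L \<Longrightarrow> I \<subseteq> L \<Longrightarrow> reach (star_edges c L) I x y \<longleftrightarrow> x = y"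
  by (simp add: reach_def adj_L)

lemma sa_empty: "sa Es {} = 1" by (subst sa.simps) simp

lemma sa_single: "sa Es {x} = 0"
proof -
  have "graph_connected Es {x}" unfolding graph_connected_def reach_def by auto
  then show ?thesis by (subst sa.simps) simp
qed

lemma sa_L: assumes cL: "c \<notin> L" and IL: "I \<subseteq> L" and ne: "I \<noteq> {}" and fin: "finite I"
  shows "sa (star_edges c L) I = 0"
proof (cases "graph_connected (star_edges c L) I")
  case True
  obtain x where x: "x \<in> I" using ne by auto
  have "y = x" if "y \<in> I" for y
  proof -
    have "reach (star_edges c L) I x y" using True x that unfolding graph_connected_def by blast
    then show ?thesis using reach_L[OF cL IL, of x y] by simp
  qed
  then have "I = {x}" using x by blast
  then show ?thesis by (simp add: sa_single)
next
  case False
  have comp: "components (star_edges c L) I = (\<lambda>x. {x}) ` I"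
  proof -
    have "{y \<in> I. reach (star_edges c L) I x y} = {x}" if "x \<in> I" for x
      using that reach_L[OF cL IL, of x] by auto
    then show ?thesis unfolding components_def by (intro image_cong) auto
  qed
  obtain x where x: "x \<in> I" using ne by auto
  have "sa (star_edges c L) I = (\<Prod>C \<in> components (star_edges c L) I. sa (star_edges c L) C)"
    apply (subst sa.simps)
    using False fin ne by (simp only: if_False if_True not_True_eq_False not_False_eq_True simp_thms)
  also have "\<dots> = 0" unfolding comp
  proof (rule iffD2[OF prod_zero_iff])
    show "finite ((\<lambda>x. {x}) ` I)" using fin by simp
    show "\<exists>a\<in>(\<lambda>x. {x}) ` I. sa (star_edges c L) a = 0"
      by (rule bexI[of _ "{x}"]) (use x sa_single in auto)
  qed
  finally show ?thesis .
qed

lemma conn: assumes "M \<subseteq> L" shows "graph_connected (star_edges c L) (insert c M)"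
proof -
  let ?E = "star_edges c L" and ?V = "insert c M"
  have a1: "(c, l) \<in> adjrel ?E ?V" and a2: "(l, c) \<in> adjrel ?E ?V" if "l \<in> M" for l
    using that assms unfolding adjrel_def star_edges_def by (auto simp: insert_commute)
  have rc: "reach ?E ?V c y" if "y \<in> ?V" for y
  proof (cases "y = c")
    case True then show ?thesis unfolding reach_def by simp
  next
    case False then have "y \<in> M" using that by simp
    then show ?thesis unfolding reach_def using a1 by (intro r_into_rtrancl)
  qed
  have cr: "reach ?E ?V x c" if "x \<in> ?V" for x
  proof (cases "x = c")
    case True then show ?thesis unfolding reach_def by simp
  next
    case False then have "x \<in> M" using that by simp
    then show ?thesis unfolding reach_def using a2 by (intro r_into_rtrancl)
  qed
  show ?thesis unfolding graph_connected_def
  proof (intro conjI ballI)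
    show "?V \<noteq> {}" by simp
    fix x y assume "x \<in> ?V" "y \<in> ?V"
    then have "reach ?E ?V x c" "reach ?E ?V c y" using rc cr by auto
    then show "reach ?E ?V x y" unfolding reach_def by (rule rtrancl_trans)
  qed
qed

lemma sum_card_group:
  assumes "finite M"
  shows "(\<Sum>M' \<in> {M'. M' \<subset> M}. g (card M')) = (\<Sum>j<card M. int (card M choose j) * g j)"
proof -
  have "(\<Sum>M' \<in> {M'. M' \<subset> M}. g (card M')) =
      (\<Sum>j<card M. \<Sum>M' \<in> {x. x \<in> {M'. M' \<subset> M} \<and> card x = j}. g (card M'))"
  proof (rule sum.group[symmetric])
    show "finite {M'. M' \<subset> M}" by (rule finite_subset[of _ "Pow M"]) (auto simp: assms)
    show "finite {..<card M}" by simp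
    show "card ` {M'. M' \<subset> M} \<subseteq> {..<card M}"
    proof
      fix j assume "j \<in> card ` {M'. M' \<subset> M}"
      then obtain M' where "M' \<subset> M" "j = card M'" by blast
      then show "j \<in> {..<card M}" using assms psubset_card_mono by auto
    qed
  qed
  also have "\<dots> = (\<Sum>j<card M. int (card M choose j) * g j)"
  proof (rule sum.cong[OF refl])
    fix j assume "j \<in> {..<card M}"
    then have j: "j < card M" by simp
    have "{x. x \<in> {M'. M' \<subset> M} \<and> card x = j} = {B. B \<subseteq> M \<and> card B = j}"
      using j by (auto simp: psubset_eq)
    then have cS: "card {x. x \<in> {M'. M' \<subset> M} \<and> card x = j} = card M choose j"
      using n_subsets[OF assms, of j] by simp
    have "(\<Sum>M' \<in> {x. x \<in> {M'. M' \<subset> M} \<and> card x = j}. g (card M')) =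
          (\<Sum>M' \<in> {x. x \<in> {M'. M' \<subset> M} \<and> card x = j}. g j)"
      by (rule sum.cong[OF refl]) simp
    also have "\<dots> = int (card M choose j) * g j" by (simp only: sum_constant cS)
    finally show "(\<Sum>M' \<in> {x. x \<in> {M'. M' \<subset> M} \<and> card x = j}. g (card M')) = int (card M choose j) * g j" .
  qed
  finally show ?thesis .
qed

lemma sa_star: assumes cL: "c \<notin> L" shows "finite M \<Longrightarrow> M \<subseteq> L \<Longrightarrow> sa (star_edges c L) (insert c M) = ss (card M)"
proof (induction "card M" arbitrary: M rule: less_induct)
  case less
  let ?E = "star_edges c L"
  have cM: "c \<notin> M" using less.prems cL by auto
  have cardV: "card (insert c M) = Suc (card M)" using cM less.prems by simp
  have sa_eq: "sa ?E (insert c M) = (if even (card (insert c M)) then - (\<Sum>I \<in> {I. I \<subset> insert c M}. sa ?E I) else 0)"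
    using conn[OF less.prems(2)] less.prems(1) by (subst sa.simps) simp
  show ?case
  proof (cases "even (card M)")
    case True
    then show ?thesis using sa_eq cardV by (simp add: ss_even)
  next
    case odd: False
    have setEq: "{I. I \<subset> insert c M} = Pow M \<union> insert c ` {M'. M' \<subset> M}"
    proof
      show "{I. I \<subset> insert c M} \<subseteq> Pow M \<union> insert c ` {M'. M' \<subset> M}"
      proof
        fix I assume "I \<in> {I. I \<subset> insert c M}"
        then have I: "I \<subset> insert c M" by simp
        show "I \<in> Pow M \<union> insert c ` {M'. M' \<subset> M}"
        proof (cases "c \<in> I")
          case True
          then have eq: "I = insert c (I - {c})" by auto
          have "I - {c} \<subset> M" using I True cM by auto
          then have "insert c (I - {c}) \<in> insert c ` {M'. M' \<subset> M}" by (intro imageI) simp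
          then show ?thesis by (subst eq) (rule UnI2)
        next
          case False then show ?thesis using I by auto
        qed
      qed
    next
      show "Pow M \<union> insert c ` {M'. M' \<subset> M} \<subseteq> {I. I \<subset> insert c M}"
        using cM by auto
    qed
    have fin1: "finite (Pow M)" using less.prems by simp
    have "finite {M'. M' \<subset> M}" by (rule finite_subset[of _ "Pow M"]) (auto simp: less.prems)
    then have fin2: "finite (insert c ` {M'. M' \<subset> M})" by (rule finite_imageI)
    have disj: "Pow M \<inter> insert c ` {M'. M' \<subset> M} = {}" using cM by auto
    have s1: "(\<Sum>I \<in> Pow M. sa ?E I) = 1"
    proof -
      have "(\<Sum>I \<in> Pow M. sa ?E I) = sa ?E {} + (\<Sum>I \<in> Pow M - {{}}. sa ?E I)"
        using fin1 by (subst sum.remove[of _ "{}"]) auto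
      also have "(\<Sum>I \<in> Pow M - {{}}. sa ?E I) = 0"
      proof (rule sum.neutral, rule ballI)
        fix I assume I: "I \<in> Pow M - {{}}"
        then have IM: "I \<subseteq> M" and ne: "I \<noteq> {}" by auto
        have "finite I" using IM less.prems(1) by (rule finite_subset)
        moreover have "I \<subseteq> L" using IM less.prems(2) by auto
        ultimately show "sa ?E I = 0" using sa_L[OF cL _ ne] by blast
      qed
      finally show ?thesis by (simp add: sa_empty)
    qed
    have inj: "inj_on (insert c) {M'. M' \<subset> M}"
    proof (rule inj_onI)
      fix x y assume "x \<in> {M'. M' \<subset> M}" "y \<in> {M'. M' \<subset> M}" "insert c x = insert c y"
      then show "x = y" using cM by (metis Diff_insert_absorb psubset_imp_subset subsetD mem_Collect_eq)
    qed
    have s2: "(\<Sum>I \<in> insert c ` {M'. M' \<subset> M}. sa ?E I) = (\<Sum>j<card M. int (card M choose j) * ss j)"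
    proof -
      have "(\<Sum>I \<in> insert c ` {M'. M' \<subset> M}. sa ?E I) = (\<Sum>M' \<in> {M'. M' \<subset> M}. sa ?E (insert c M'))"
        by (rule sum.reindex[OF inj, unfolded comp_def])
      also have "\<dots> = (\<Sum>M' \<in> {M'. M' \<subset> M}. ss (card M'))"
      proof (rule sum.cong[OF refl])
        fix M' assume "M' \<in> {M'. M' \<subset> M}"
        then have M': "M' \<subset> M" by simp
        then have "card M' < card M" using less.prems by (simp add: psubset_card_mono)
        moreover have "finite M'" using M' less.prems finite_subset by auto
        moreover have "M' \<subseteq> L" using M' less.prems by auto
        ultimately show "sa ?E (insert c M') = ss (card M')" using less.hyps by blast
      qed
      also have "\<dots> = (\<Sum>j<card M. int (card M choose j) * ss j)"
        by (rule sum_card_group) (use less.prems in simp)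
      finally show ?thesis .
    qed
    have "(\<Sum>I \<in> {I. I \<subset> insert c M}. sa ?E I) = 1 + (\<Sum>j<card M. int (card M choose j) * ss j)"
      unfolding setEq using sum.union_disjoint[OF fin1 fin2 disj, of "sa ?E"] s1 s2 by simp
    moreover have "ss (card M) = - (1 + (\<Sum>j<card M. int (card M choose j) * ss j))"
      using odd by (subst ss.simps) simp
    ultimately show ?thesis using sa_eq cardV odd by simp
  qed
qed

lemma ai_star: assumes cL: "c \<notin> L" and fL: "finite L" and i: "i \<ge> 1"
  shows "a_i i (star_edges c L) (insert c L) = (card L choose (2*i-1)) * nat \<bar>ss (2*i-1)\<bar>"
proof -
  let ?E = "star_edges c L"
  let ?A = "{I. I \<subseteq> L \<and> card I = 2*i}"
  let ?B = "{M. M \<subseteq> L \<and> card M = 2*i-1}"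
  have setEq: "{I. I \<subseteq> insert c L \<and> card I = 2*i} = ?A \<union> insert c ` ?B"
  proof
    show "{I. I \<subseteq> insert c L \<and> card I = 2*i} \<subseteq> ?A \<union> insert c ` ?B"
    proof
      fix I assume "I \<in> {I. I \<subseteq> insert c L \<and> card I = 2*i}"
      then have I: "I \<subseteq> insert c L" "card I = 2*i" by auto
      have fI: "finite I" by (rule rev_finite_subset[OF _ I(1)]) (simp add: fL)
      show "I \<in> ?A \<union> insert c ` ?B"
      proof (cases "c \<in> I")
        case True
        then have eq: "I = insert c (I - {c})" by auto
        have "I - {c} \<in> ?B" using I True fI by auto
        then have "insert c (I - {c}) \<in> insert c ` ?B" by (rule imageI)
        then show ?thesis by (subst eq) (rule UnI2)
      next
        case False then show ?thesis using I by auto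
      qed
    qed
  next
    show "?A \<union> insert c ` ?B \<subseteq> {I. I \<subseteq> insert c L \<and> card I = 2*i}"
    proof
      fix I assume "I \<in> ?A \<union> insert c ` ?B"
      then show "I \<in> {I. I \<subseteq> insert c L \<and> card I = 2*i}"
      proof
        assume "I \<in> ?A" then show ?thesis by auto
      next
        assume "I \<in> insert c ` ?B"
        then obtain M where M: "M \<subseteq> L" "card M = 2*i-1" "I = insert c M" by auto
        have "finite M" by (rule rev_finite_subset[OF fL M(1)])
        moreover have "c \<notin> M" using M cL by auto
        ultimately have "card I = Suc (2*i-1)" using M by simp
        then have "card I = 2*i" using i by simp
        then show ?thesis using M by auto
      qed
    qed
  qed
  have fA: "finite ?A" using fL by simp
  have fB: "finite (insert c ` ?B)" using fL by simp
  have disj: "?A \<inter> insert c ` ?B = {}" using cL by auto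
  have sA: "(\<Sum>I \<in> ?A. a_num ?E I) = 0"
  proof (rule sum.neutral, rule ballI)
    fix I assume "I \<in> ?A"
    then have I: "I \<subseteq> L" "card I = 2*i" by auto
    then have "I \<noteq> {}" using i by auto
    moreover have "finite I" by (rule rev_finite_subset[OF fL I(1)])
    ultimately show "a_num ?E I = 0" using sa_L[OF cL I(1)] by (simp add: a_num_def)
  qed
  have inj: "inj_on (insert c) ?B"
  proof (rule inj_onI)
    fix x y assume "x \<in> ?B" "y \<in> ?B" "insert c x = insert c y"
    then show "x = y" using cL by (metis Diff_insert_absorb subsetD mem_Collect_eq)
  qed
  have sB: "(\<Sum>I \<in> insert c ` ?B. a_num ?E I) = (card L choose (2*i-1)) * nat \<bar>ss (2*i-1)\<bar>"
  proof -
    have "(\<Sum>I \<in> insert c ` ?B. a_num ?E I) = (\<Sum>M \<in> ?B. a_num ?E (insert c M))"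
      by (rule sum.reindex[OF inj, unfolded comp_def])
    also have "\<dots> = (\<Sum>M \<in> ?B. nat \<bar>ss (2*i-1)\<bar>)"
    proof (rule sum.cong[OF refl])
      fix M assume "M \<in> ?B"
      then have M: "M \<subseteq> L" "card M = 2*i-1" by auto
      have "finite M" by (rule rev_finite_subset[OF fL M(1)])
      then show "a_num ?E (insert c M) = nat \<bar>ss (2*i-1)\<bar>"
        using sa_star[OF cL, of M] M by (simp add: a_num_def)
    qed
    also have "\<dots> = (card L choose (2*i-1)) * nat \<bar>ss (2*i-1)\<bar>"
      using n_subsets[OF fL, of "2*i-1"] by simp
    finally show ?thesis .
  qed
  show ?thesis unfolding a_i_def setEq
    using sum.union_disjoint[OF fA fB disj, of "a_num ?E"] sA sB by simp
qed

lemma abs_ss_uu: "odd m \<Longrightarrow> nat \<bar>ss m\<bar> = nat (uu m)"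
proof -
  assume m: "odd m"
  have "\<bar>ss m\<bar> = \<bar>uu m\<bar>" by (simp add: uu_def abs_mult power_abs)
  also have "\<dots> = uu m" using uu_bound[OF m] by simp
  finally show ?thesis by simp
qed

theorem mainTheorem12:
  fixes k :: nat and c :: 'a and L :: "'a set"
  assumes "k \<ge> 3" and "finite L" and "card L = 2 * k" and "c \<notin> L"
  shows "a_i (k - 1) (star_edges c L) (insert c L) < a_i k (star_edges c L) (insert c L)"
proof -
  define m where "m = 2*k - 3"
  define N where "N = 2*k"
  obtain j where kj: "k = j + 3" using assms(1) le_Suc_ex[of 3 k] by (auto simp: add.commute)
  have mj: "m = 2*j + 3" unfolding m_def kj by simp
  have m_odd: "odd m" unfolding mj by simp
  have e1: "2*(k-1) - 1 = m" unfolding mj kj by simp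
  have e2: "2*k - 1 = m+2" unfolding mj kj by simp
  have "a_i (k - 1) (star_edges c L) (insert c L) = (card L choose (2*(k-1)-1)) * nat \<bar>ss (2*(k-1)-1)\<bar>"
    by (rule ai_star) (use assms in simp_all)
  also have "\<dots> = (N choose m) * nat (uu m)" unfolding e1 abs_ss_uu[OF m_odd] assms(3) N_def ..
  finally have lhs: "a_i (k - 1) (star_edges c L) (insert c L) = (N choose m) * nat (uu m)" .
  have m2_odd: "odd (m+2)" using m_odd by simp
  have "a_i k (star_edges c L) (insert c L) = (card L choose (2*k-1)) * nat \<bar>ss (2*k-1)\<bar>"
    by (rule ai_star) (use assms in simp_all)
  also have "\<dots> = (N choose (m+2)) * nat (uu (m+2))" unfolding e2 abs_ss_uu[OF m2_odd] assms(3) N_def ..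
  finally have rhs: "a_i k (star_edges c L) (insert c L) = (N choose (m+2)) * nat (uu (m+2))" .
  have Nm: "N = m + 3" using N_def m_def assms(1) by simp
  have c1: "N choose (m+2) = N"
  proof -
    have "N - (m+2) = 1" "m + 2 \<le> N" using Nm by simp_all
    then show ?thesis using binomial_symmetric[of "m+2" N] by (simp only: choose_one)
  qed
  have c3: "(N choose m) * 6 = N * (m+2) * (m+1)"
  proof -
    have "N - m = 3" "m \<le> N" using Nm by simp_all
    then have a: "N choose m = N choose 3" using binomial_symmetric[of m N] by (simp only:)
    have "N \<ge> 2" using Nm by simp
    then have "(N choose (1+2)) * (1+2) * (1+1) = N * (N-1) * ((N-2) choose 1)"
      by (rule binom_shift2)
    then have b: "(N choose 3) * 6 = N * (N-1) * (N-2)"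
      by (simp add: numeral_3_eq_3)
    have "N - 1 = m + 2" "N - 2 = m + 1" using Nm by simp_all
    then show ?thesis using a b by (simp only: mult.assoc)
  qed
  obtain pos: "uu m > 0" and bd: "3 * uu (m+2) \<ge> int ((m+2)*(m+1)) * uu m"
    using uu_bound[OF m_odd] by blast
  have pos2: "uu (m+2) > 0" using uu_bound[of "m+2"] m_odd by simp
  have h1: "int N * (int ((m+2)*(m+1)) * uu m) \<le> int N * (3 * uu (m+2))"
    by (rule mult_left_mono[OF bd]) simp
  have h2: "6 * (int (N choose m) * uu m) = int N * (int ((m+2)*(m+1)) * uu m)"
  proof -
    have "int ((N choose m) * 6) = int (N * (m+2) * (m+1))" by (simp only: c3)
    then have "int (N choose m) * 6 = int N * int ((m+2)*(m+1))" by (simp only: of_nat_mult mult.assoc)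
    note hh = this
    have "6 * (int (N choose m) * uu m) = (int (N choose m) * 6) * uu m" by (simp only: mult_ac)
    also have "\<dots> = (int N * int ((m+2)*(m+1))) * uu m" by (simp only: hh)
    finally show ?thesis by (simp only: mult.assoc)
  qed
  have "N choose m > 0" by (rule zero_less_binomial) (simp add: Nm)
  then have h3: "int (N choose m) * uu m > 0" using pos by (intro mult_pos_pos) simp_all
  have h1': "int N * (3 * uu (m+2)) = 3 * (int N * uu (m+2))" by (simp only: mult_ac)
  have "int (N choose m) * uu m < int N * uu (m+2)" using h1 h1' h2 h3 by linarith
  then have "int ((N choose m) * nat (uu m)) < int (N * nat (uu (m+2)))" using pos pos2 by simp
  then have "(N choose m) * nat (uu m) < N * nat (uu (m+2))" by (simp only: of_nat_less_iff)
  then show ?thesis using lhs rhs c1 by simp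
qed

end
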